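(* Let $G$ be a finite simple forest with $\operatorname{mat}(G)\geq 2$, let $x$ be a distant leaf of $G$ with neighbor $y$. Then for any $2\leq k\leq\operatorname{mat}(G)$, \[\operatorname{aim}(G-\{x,y\},k-1)+1\leq\operatorname{aim}(G,k).\]
   Context: A leaf is a vertex of degree $1$; a leaf $x$ with unique neighbor $y$ is a distant leaf if $y$ has at most one neighbor of degree greater than $1$. $G-U$ is the induced subgraph on $V(G)\setminus U$. $\operatorname{mat}$ is the matching number. Two edges form a gap if they are disjoint and no edge of the graph joins a vertex of one to a vertex of the other. A sequence $(a_1,\dots,a_n)$ of integers is $k$-admissable if $a_i\ge1$ and $\sum a_i\le n+k-1$. For a graph $H$ and $1\le k\le\operatorname{mat}(H)$, a matching $M$ of $H$ is $k$-admissable if there are nonempty pairwise disjoint $M_1,\dots,M_r\subseteq M$ with union $M$ such that edges from different $M_i$'s always form a gap in $H$, $(|M_1|,\dots,|M_r|)$ is $k$-admissable, and the induced subgraph of $H$ on $\bigcup_{e\in M_i}e$ is a forest for each $i$. $\operatorname{aim}(H,k)$ is the maximum size of a $k$-admissable matching of $H$ ($0$ if none). *)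

theory Defs
  imports Main
begin

definition simple_graph :: "'a set \<Rightarrow> 'a set set \<Rightarrow> bool" where
  "simple_graph V E \<longleftrightarrow> finite V \<and> (\<forall>e\<in>E. e \<subseteq> V \<and> card e = 2)"

definition neighbors :: "'a set set \<Rightarrow> 'a \<Rightarrow> 'a set" where
  "neighbors E v = {u. {u, v} \<in> E}"

definition degree :: "'a set set \<Rightarrow> 'a \<Rightarrow> nat" where
  "degree E v = card (neighbors E v)"

definition is_cycle :: "'a set \<Rightarrow> 'a set set \<Rightarrow> 'a list \<Rightarrow> bool" where
  "is_cycle V E vs \<longleftrightarrow> length vs \<ge> 3 \<and> distinct vs \<and> set vs \<subseteq> V \<and>
     (\<forall>i. Suc i < length vs \<longrightarrow> {vs ! i, vs ! Suc i} \<in> E) \<and>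
     {last vs, hd vs} \<in> E"

definition forest :: "'a set \<Rightarrow> 'a set set \<Rightarrow> bool" where
  "forest V E \<longleftrightarrow> simple_graph V E \<and> \<not> (\<exists>vs. is_cycle V E vs)"

definition induced_edges :: "'a set set \<Rightarrow> 'a set \<Rightarrow> 'a set set" where
  "induced_edges E S = {e \<in> E. e \<subseteq> S}"

definition leaf :: "'a set set \<Rightarrow> 'a \<Rightarrow> bool" where
  "leaf E x \<longleftrightarrow> degree E x = 1"

definition distant_leaf :: "'a set set \<Rightarrow> 'a \<Rightarrow> 'a \<Rightarrow> bool" where
  "distant_leaf E x y \<longleftrightarrow> leaf E x \<and> neighbors E x = {y} \<and>
     card {z \<in> neighbors E y. degree E z > 1} \<le> 1"

definition matching :: "'a set set \<Rightarrow> 'a set set \<Rightarrow> bool" where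
  "matching E M \<longleftrightarrow> M \<subseteq> E \<and> (\<forall>e\<in>M. \<forall>f\<in>M. e \<noteq> f \<longrightarrow> e \<inter> f = {})"

definition mat :: "'a set set \<Rightarrow> nat" where
  "mat E = Max {card M | M. matching E M}"

definition gap :: "'a set set \<Rightarrow> 'a set \<Rightarrow> 'a set \<Rightarrow> bool" where
  "gap E e f \<longleftrightarrow> e \<inter> f = {} \<and> (\<forall>u\<in>e. \<forall>v\<in>f. {u, v} \<notin> E)"

definition admissable_seq :: "nat \<Rightarrow> nat list \<Rightarrow> bool" where
  "admissable_seq k as \<longleftrightarrow> (\<forall>a\<in>set as. a \<ge> 1) \<and>
     int (sum_list as) \<le> int (length as) + int k - 1"

definition admissable_matching :: "'a set \<Rightarrow> 'a set set \<Rightarrow> nat \<Rightarrow> 'a set set \<Rightarrow> bool" where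
  "admissable_matching V E k M \<longleftrightarrow> matching E M \<and>
     (\<exists>Ms :: 'a set set list.
        (\<forall>i<length Ms. Ms ! i \<noteq> {} \<and> Ms ! i \<subseteq> M) \<and>
        (\<forall>i<length Ms. \<forall>j<length Ms. i \<noteq> j \<longrightarrow> Ms ! i \<inter> Ms ! j = {}) \<and>
        \<Union> (set Ms) = M \<and>
        (\<forall>i<length Ms. \<forall>j<length Ms. i \<noteq> j \<longrightarrow>
            (\<forall>e\<in>Ms ! i. \<forall>f\<in>Ms ! j. gap E e f)) \<and>
        admissable_seq k (map card Ms) \<and>
        (\<forall>i<length Ms. forest (\<Union> (Ms ! i)) (induced_edges E (\<Union> (Ms ! i)))))"

definition aim :: "'a set \<Rightarrow> 'a set set \<Rightarrow> nat \<Rightarrow> nat" where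
  "aim V E k = Max (insert 0 {card M | M. admissable_matching V E k M})"

end

theory Submission
  imports Defs
begin

lemma forest_induced:
  assumes "forest V E" "S \<subseteq> V"
  shows "forest S (induced_edges E S)"
proof -
  have fV: "finite V" using assms(1) unfolding forest_def simple_graph_def by blast
  have sg: "simple_graph S (induced_edges E S)"
    using assms fV finite_subset unfolding forest_def simple_graph_def induced_edges_def by blast
  have "\<not> (\<exists>vs. is_cycle S (induced_edges E S) vs)"
  proof
    assume "\<exists>vs. is_cycle S (induced_edges E S) vs"
    then obtain vs where "is_cycle S (induced_edges E S) vs" by blast
    then have "is_cycle V E vs" using assms(2) unfolding is_cycle_def induced_edges_def by blast
    then show False using assms(1) unfolding forest_def by blast
  qed
  then show ?thesis using sg unfolding forest_def by blast
qed

lemma gap_sym: "gap E e f \<Longrightarrow> gap E f e"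
  unfolding gap_def by (metis inf_commute insert_commute)

lemma Union_set_nth: "(a \<in> \<Union> (set L)) = (\<exists>j<length L. a \<in> L ! j)"
  by (metis UnionE UnionI in_set_conv_nth)

lemma extend:
  assumes F: "forest V E" and xV: "x \<in> V" and DL: "distant_leaf E x y" and k2: "2 \<le> k"
    and A: "admissable_matching (V - {x, y}) (induced_edges E (V - {x, y})) (k - 1) M"
  shows "admissable_matching V E k (insert {x,y} M) \<and> card (insert {x,y} M) = card M + 1"
proof -
  define V' where "V' = V - {x,y}"
  define E' where "E' = induced_edges E V'"
  have fV: "finite V" and EV: "\<forall>e\<in>E. e \<subseteq> V \<and> card e = 2"
    using F unfolding forest_def simple_graph_def by blast+
  have Nx: "neighbors E x = {y}" using DL unfolding distant_leaf_def by blast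
  have xyE: "{x,y} \<in> E" using Nx unfolding neighbors_def by (auto simp: insert_commute)
  have xy: "x \<noteq> y" using EV xyE by fastforce
  have yV: "y \<in> V" using EV xyE by blast
  from A obtain Ms where
    mat': "matching E' M" and
    P1: "\<forall>i<length Ms. Ms ! i \<noteq> {} \<and> Ms ! i \<subseteq> M" and
    P2: "\<forall>i<length Ms. \<forall>j<length Ms. i \<noteq> j \<longrightarrow> Ms ! i \<inter> Ms ! j = {}" and
    P3: "\<Union> (set Ms) = M" and
    P4: "\<forall>i<length Ms. \<forall>j<length Ms. i \<noteq> j \<longrightarrow> (\<forall>e\<in>Ms ! i. \<forall>f\<in>Ms ! j. gap E' e f)" and
    P5: "admissable_seq (k-1) (map card Ms)"
    unfolding admissable_matching_def V'_def E'_def by blast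
  have ME: "M \<subseteq> E" and MV: "\<forall>e\<in>M. e \<subseteq> V'"
    using mat' unfolding matching_def E'_def induced_edges_def by auto
  have Mdisj: "\<forall>e\<in>M. \<forall>f\<in>M. e \<noteq> f \<longrightarrow> e \<inter> f = {}" using mat' unfolding matching_def by blast
  have finE: "finite E" using fV EV by (meson Pow_iff finite_Pow_iff finite_subset subsetI)
  have finM: "finite M" using ME finE finite_subset by blast
  have xyM: "{x,y} \<notin> M" using MV unfolding V'_def by blast
  have cardM: "card (insert {x,y} M) = card M + 1" using finM xyM by simp
  have matN: "matching E (insert {x,y} M)"
    unfolding matching_def using ME xyE Mdisj MV unfolding V'_def by blast
  have gapE: "\<forall>i<length Ms. \<forall>j<length Ms. i \<noteq> j \<longrightarrow> (\<forall>e\<in>Ms ! i. \<forall>f\<in>Ms ! j. gap E e f)"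
  proof (intro allI impI ballI)
    fix i j e f assume h: "i < length Ms" "j < length Ms" "i \<noteq> j" "e \<in> Ms ! i" "f \<in> Ms ! j"
    then have g: "gap E' e f" using P4 by blast
    have "e \<subseteq> V'" "f \<subseteq> V'" using h P1 MV by blast+
    then show "gap E e f" using g unfolding gap_def E'_def induced_edges_def by blast
  qed
  have xgap: "\<forall>f\<in>M. \<forall>v\<in>f. {x,v} \<notin> E"
  proof (intro ballI notI)
    fix f v assume "f \<in> M" "v \<in> f" "{x,v} \<in> E"
    then have "v \<in> neighbors E x" unfolding neighbors_def by (simp add: insert_commute)
    then have "v = y" using Nx by blast
    then show False using \<open>f \<in> M\<close> \<open>v \<in> f\<close> MV unfolding V'_def by blast
  qed
  have deg: "1 < degree E v" if "f \<in> M" and vf: "v \<in> f" and "{y,v} \<in> E" for f v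
  proof -
    have "f \<in> E" "card f = 2" using that ME EV by blast+
    then obtain a b where ab: "f = {a,b}" "a \<noteq> b" by (meson card_2_iff)
    obtain w where w: "f = {v,w}" "v \<noteq> w" using ab vf by (metis insert_commute insertE singletonD)
    have "w \<noteq> y" using w that(1) MV unfolding V'_def by blast
    have N: "{y,w} \<subseteq> neighbors E v" using that(3) w \<open>f \<in> E\<close>
      unfolding neighbors_def by (auto simp: insert_commute)
    have "finite (neighbors E v)"
    proof (rule finite_subset[OF _ fV])
      show "neighbors E v \<subseteq> V" unfolding neighbors_def using EV by blast
    qed
    then have "card {y,w} \<le> card (neighbors E v)" using N card_mono by blast
    then show ?thesis using \<open>w \<noteq> y\<close> unfolding degree_def by simp
  qed
  have yuniq: "v = w" if "f \<in> M" "v \<in> f" "{y,v} \<in> E" "g \<in> M" "w \<in> g" "{y,w} \<in> E" for f g v w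
  proof -
    let ?Z = "{z \<in> neighbors E y. degree E z > 1}"
    have c: "card ?Z \<le> 1" using DL unfolding distant_leaf_def by blast
    have fz: "finite ?Z"
    proof (rule finite_subset[OF _ fV])
      show "?Z \<subseteq> V" unfolding neighbors_def using EV by blast
    qed
    have "v \<in> ?Z" "w \<in> ?Z" using deg that unfolding neighbors_def by (auto simp: insert_commute)
    then show ?thesis using c card_le_Suc0_iff_eq[OF fz] by auto
  qed
  have forestN: "forest (\<Union> S) (induced_edges E (\<Union> S))" if "S \<subseteq> insert {x,y} M" for S
  proof (rule forest_induced[OF F])
    have "\<Union> (insert {x,y} M) \<subseteq> V" using ME xyE EV by blast
    then show "\<Union> S \<subseteq> V" using that by blast
  qed
  have seq: "int (sum_list (map card Ms)) \<le> int (length Ms) + int k - 2"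
    using P5 k2 unfolding admissable_seq_def by simp
  have pos: "\<forall>a\<in>set (map card Ms). a \<ge> 1" using P5 unfolding admissable_seq_def by blast
  show ?thesis
  proof (cases "\<exists>f\<in>M. \<exists>v\<in>f. {y,v} \<in> E")
    case False
    have gxy: "gap E {x,y} f" if "f \<in> M" for f
      unfolding gap_def using False xgap that MV unfolding V'_def by blast
    define Ms' where "Ms' = Ms @ [{{x,y}}]"
    have L: "length Ms' = Suc (length Ms)" unfolding Ms'_def by simp
    have nth': "Ms' ! i = (if i < length Ms then Ms ! i else {{x,y}})" if "i < length Ms'" for i
      using that L unfolding Ms'_def by (auto simp: nth_append)
    have "admissable_matching V E k (insert {x,y} M)"
      unfolding admissable_matching_def
    proof (intro conjI exI[of _ Ms'])
      show "matching E (insert {x, y} M)" by (rule matN)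
      show sub: "\<forall>i<length Ms'. Ms' ! i \<noteq> {} \<and> Ms' ! i \<subseteq> insert {x, y} M"
      proof (intro allI impI)
        fix i assume h: "i < length Ms'"
        show "Ms' ! i \<noteq> {} \<and> Ms' ! i \<subseteq> insert {x, y} M"
        proof (cases "i < length Ms")
          case True then show ?thesis using nth'[OF h] P1 by auto
        next
          case False then show ?thesis using nth'[OF h] by auto
        qed
      qed
      show "\<forall>i<length Ms'. \<forall>j<length Ms'. i \<noteq> j \<longrightarrow> Ms' ! i \<inter> Ms' ! j = {}"
      proof (intro allI impI)
        fix i j assume h: "i < length Ms'" "j < length Ms'" "i \<noteq> j"
        show "Ms' ! i \<inter> Ms' ! j = {}"
        proof (cases "i < length Ms")
          case True note iT = True
          show ?thesis
          proof (cases "j < length Ms")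
            case True then show ?thesis using iT h nth'[OF h(1)] nth'[OF h(2)] P2 by auto
          next
            case False then show ?thesis using iT nth'[OF h(1)] nth'[OF h(2)] P1 xyM by auto
          qed
        next
          case False
          then have "j < length Ms" using h L by auto
          then show ?thesis using False nth'[OF h(1)] nth'[OF h(2)] P1 xyM by auto
        qed
      qed
      show "\<Union> (set Ms') = insert {x, y} M" using P3 unfolding Ms'_def by auto
      show "\<forall>i<length Ms'. \<forall>j<length Ms'. i \<noteq> j \<longrightarrow> (\<forall>e\<in>Ms' ! i. \<forall>f\<in>Ms' ! j. gap E e f)"
      proof (intro allI impI ballI)
        fix i j e f assume h: "i < length Ms'" "j < length Ms'" "i \<noteq> j" "e \<in> Ms' ! i" "f \<in> Ms' ! j"
        show "gap E e f"
        proof (cases "i < length Ms")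
          case True
          note iT = True
          show ?thesis
          proof (cases "j < length Ms")
            case True then show ?thesis using iT h nth'[OF h(1)] nth'[OF h(2)] gapE by auto
          next
            case False
            then have "f = {x,y}" "e \<in> M" using iT h nth'[OF h(1)] nth'[OF h(2)] P1 by auto
            then show ?thesis using gxy gap_sym by blast
          qed
        next
          case False
          then have "e = {x,y}" "i = length Ms" using h nth'[OF h(1)] L by auto
          then have "j < length Ms" using h L by auto
          then have "f \<in> M" using h nth'[OF h(2)] P1 by auto
          then show ?thesis using gxy \<open>e = {x,y}\<close> by blast
        qed
      qed
      show "admissable_seq k (map card Ms')"
        unfolding admissable_seq_def Ms'_def using pos seq xy by auto
      show "\<forall>i<length Ms'. forest (\<Union> (Ms' ! i)) (induced_edges E (\<Union> (Ms' ! i)))"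
        using forestN sub by blast
    qed
    then show ?thesis using cardM by blast
  next
    case True
    then obtain f0 v0 where f0: "f0 \<in> M" "v0 \<in> f0" "{y,v0} \<in> E" by blast
    then obtain i0 where i0: "i0 < length Ms" "f0 \<in> Ms ! i0" using P3 Union_set_nth by metis
    have gxy: "gap E {x,y} f" if fM0: "f \<in> M" and "f \<notin> Ms ! i0" for f
    proof -
      obtain j where j: "j < length Ms" "f \<in> Ms ! j" using fM0 P3 Union_set_nth by metis
      then have "j \<noteq> i0" using that by blast
      then have "gap E f0 f" using gapE i0 j by blast
      then have "v0 \<notin> f" using f0 unfolding gap_def by blast
      then have "\<forall>v\<in>f. {y,v} \<notin> E" using yuniq f0 that(1) by blast
      then show ?thesis unfolding gap_def using xgap that MV unfolding V'_def by blast
    qed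
    define Ms' where "Ms' = Ms[i0 := insert {x,y} (Ms ! i0)]"
    have L: "length Ms' = length Ms" unfolding Ms'_def by simp
    have nth': "Ms' ! i = (if i = i0 then insert {x,y} (Ms ! i0) else Ms ! i)" if "i < length Ms'" for i
      using that L i0 unfolding Ms'_def by (auto simp: nth_list_update)
    have fin0: "finite (Ms ! i0)" using P1 i0 finM finite_subset by blast
    have xy0: "{x,y} \<notin> Ms ! i0" using P1 i0 xyM by blast
    have "admissable_matching V E k (insert {x,y} M)"
      unfolding admissable_matching_def
    proof (intro conjI exI[of _ Ms'])
      show "matching E (insert {x, y} M)" by (rule matN)
      show sub: "\<forall>i<length Ms'. Ms' ! i \<noteq> {} \<and> Ms' ! i \<subseteq> insert {x, y} M"
      proof (intro allI impI)
        fix i assume h: "i < length Ms'"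
        show "Ms' ! i \<noteq> {} \<and> Ms' ! i \<subseteq> insert {x, y} M"
          using nth'[OF h] P1 L h by auto
      qed
      show "\<forall>i<length Ms'. \<forall>j<length Ms'. i \<noteq> j \<longrightarrow> Ms' ! i \<inter> Ms' ! j = {}"
      proof (intro allI impI)
        fix i j assume h: "i < length Ms'" "j < length Ms'" "i \<noteq> j"
        show "Ms' ! i \<inter> Ms' ! j = {}"
          using h nth'[OF h(1)] nth'[OF h(2)] P2 P1 L xyM i0 by (auto split: if_splits)
      qed
      show "\<Union> (set Ms') = insert {x, y} M"
      proof
        show "\<Union> (set Ms') \<subseteq> insert {x, y} M"
        proof
          fix e assume "e \<in> \<Union> (set Ms')"
          then obtain j where "j < length Ms'" "e \<in> Ms' ! j" unfolding Union_set_nth by blast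
          then show "e \<in> insert {x, y} M" using sub by blast
        qed
        show "insert {x, y} M \<subseteq> \<Union> (set Ms')"
        proof
          fix e assume "e \<in> insert {x,y} M"
          then show "e \<in> \<Union> (set Ms')"
          proof
            assume "e = {x,y}" then show ?thesis unfolding Union_set_nth using nth' L i0 by auto
          next
            assume "e \<in> M"
            then obtain j where "j < length Ms" "e \<in> Ms ! j" using P3 Union_set_nth by metis
            then show ?thesis unfolding Union_set_nth using nth' L by (metis insertCI)
          qed
        qed
      qed
      show "\<forall>i<length Ms'. \<forall>j<length Ms'. i \<noteq> j \<longrightarrow> (\<forall>e\<in>Ms' ! i. \<forall>f\<in>Ms' ! j. gap E e f)"
      proof (intro allI impI ballI)
        fix i j e f assume h: "i < length Ms'" "j < length Ms'" "i \<noteq> j" "e \<in> Ms' ! i" "f \<in> Ms' ! j"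
        show "gap E e f"
        proof (cases "i = i0")
          case True
          then have jn: "j \<noteq> i0" "f \<in> Ms ! j" using h nth'[OF h(2)] by auto
          have jl: "j < length Ms" using h L by simp
          have fM: "f \<in> M" using jn jl P1 by blast
          have "Ms ! j \<inter> Ms ! i0 = {}" using P2 jl i0 jn by blast
          then have fM2: "f \<notin> Ms ! i0" using jn by blast
          note fM = fM fM2
          show ?thesis
          proof (cases "e = {x,y}")
            case True then show ?thesis using gxy fM by blast
          next
            case False
            then have "e \<in> Ms ! i0" using h nth'[OF h(1)] \<open>i = i0\<close> by auto
            moreover have "i0 \<noteq> j" using jn by simp
            ultimately show ?thesis using gapE[rule_format, OF i0(1) jl] jn(2) by blast
          qed
        next
          case False
          note iF = False
          then have ei: "e \<in> Ms ! i" using h nth'[OF h(1)] by auto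
          have il: "i < length Ms" using h L by simp
          have eM1: "e \<in> M" using ei il P1 by blast
          have "Ms ! i \<inter> Ms ! i0 = {}" using P2 il i0 iF by blast
          then have eM2: "e \<notin> Ms ! i0" using ei by blast
          note eM = eM1 eM2
          show ?thesis
          proof (cases "j = i0")
            case True
            show ?thesis
            proof (cases "f = {x,y}")
              case True then show ?thesis using gxy eM gap_sym by blast
            next
              case False
              then have "f \<in> Ms ! i0" using h nth'[OF h(2)] \<open>j = i0\<close> by auto
              then show ?thesis using gapE[rule_format, OF il i0(1) iF ei] by blast
            qed
          next
            case False
            then have "f \<in> Ms ! j" using h nth'[OF h(2)] by auto
            moreover have "j < length Ms" using h L by simp
            ultimately show ?thesis using gapE[rule_format, OF il _ h(3) ei] by blast
          qed
        qed
      qed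
      show "admissable_seq k (map card Ms')"
      proof -
        have c: "card (insert {x,y} (Ms ! i0)) = card (Ms ! i0) + 1" using fin0 xy0 by simp
        have m: "map card Ms' = (map card Ms)[i0 := card (Ms ! i0) + 1]"
          unfolding Ms'_def map_update c by simp
        have s: "sum_list (map card Ms') = sum_list (map card Ms) + 1"
          unfolding m using i0 by (simp add: sum_list_update)
        have p: "\<forall>a\<in>set (map card Ms'). a \<ge> 1"
          unfolding m using pos set_update_subset_insert[of "map card Ms" i0 "card (Ms ! i0) + 1"] by auto
        show ?thesis unfolding admissable_seq_def using p s seq L by simp
      qed
      show "\<forall>i<length Ms'. forest (\<Union> (Ms' ! i)) (induced_edges E (\<Union> (Ms' ! i)))"
        using forestN sub by blast
    qed
    then show ?thesis using cardM by blast
  qed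
qed

theorem lemma4p5:
  fixes V :: "'a set" and E :: "'a set set" and x y :: 'a and k :: nat
  assumes "forest V E"
    and "mat E \<ge> 2"
    and "x \<in> V" and "distant_leaf E x y"
    and "2 \<le> k" and "k \<le> mat E"
  shows "aim (V - {x, y}) (induced_edges E (V - {x, y})) (k - 1) + 1 \<le> aim V E k"
proof -
  define V' where "V' = V - {x,y}"
  define E' where "E' = induced_edges E V'"
  have fV: "finite V" and EV: "\<forall>e\<in>E. e \<subseteq> V \<and> card e = 2"
    using assms(1) unfolding forest_def simple_graph_def by blast+
  have finE: "finite E" using fV EV by (meson Pow_iff finite_Pow_iff finite_subset subsetI)
  have finS: "finite {card M | M. admissable_matching V' E' (k-1) M}"
  proof (rule finite_subset[of _ "card ` Pow E"])
    show "{card M | M. admissable_matching V' E' (k-1) M} \<subseteq> card ` Pow E"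
      unfolding admissable_matching_def matching_def E'_def induced_edges_def by auto
  qed (use finE in simp)
  have finS2: "finite {card M | M. admissable_matching V E k M}"
  proof (rule finite_subset[of _ "card ` Pow E"])
    show "{card M | M. admissable_matching V E k M} \<subseteq> card ` Pow E"
      unfolding admissable_matching_def matching_def by auto
  qed (use finE in simp)
  obtain M where M: "admissable_matching V' E' (k-1) M"
    and cM: "card M = aim V' E' (k-1)"
  proof (cases "aim V' E' (k-1) = 0")
    case True
    have "admissable_matching V' E' (k-1) {}"
      unfolding admissable_matching_def matching_def
      using assms(5) by (intro conjI exI[of _ "[]"]) (auto simp: admissable_seq_def)
    then show ?thesis using that True by simp
  next
    case False
    have "aim V' E' (k-1) \<in> insert 0 {card M | M. admissable_matching V' E' (k-1) M}"
      unfolding aim_def using finS by (intro Max_in) auto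
    then show ?thesis using that False by auto
  qed
  have "admissable_matching V E k (insert {x,y} M) \<and> card (insert {x,y} M) = card M + 1"
    using extend[OF assms(1) assms(3) assms(4) assms(5)] M unfolding V'_def E'_def by blast
  then have mem: "card M + 1 \<in> insert 0 {card M | M. admissable_matching V E k M}"
    by (intro insertI2 CollectI exI[of _ "insert {x,y} M"]) simp
  then have "card M + 1 \<le> aim V E k"
    unfolding aim_def using finS2 by (intro Max_ge) auto
  then show ?thesis using cM unfolding V'_def E'_def by simp
qed

end
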